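(* Let $G$ be a group and $(\rho,V)$ a linear representation of $G$ on a finite-dimensional vector space $V$ over a field $k$. Let $A$ be a nonempty finite subset of $G$ and $Y$ a $k$-subspace of $V$ with $\dim\langle A\cdot Y\rangle\leq\alpha|A|$ for some $\alpha\in\mathbb{R}_{\geq0}$. Then there exists a nonempty subset $B\subset A$ such that $\dim\langle CB\cdot Y\rangle\leq\alpha|CB|$ for every finite subset $C$ of $G$.
   Context: $g\cdot v=\rho(g)v$; for $S\subset G$, $\langle S\cdot Y\rangle$ is the $k$-span of $\{s\cdot v\mid s\in S,v\in Y\}$; $CB=\{cb\mid c\in C,b\in B\}$. *)

theory Defs
  imports "HOL-Algebra.Algebra"
begin

definition representation ::
  "('g, 'm) monoid_scheme \<Rightarrow> ('k::field \<Rightarrow> 'v::ab_group_add \<Rightarrow> 'v) \<Rightarrow> ('g \<Rightarrow> 'v \<Rightarrow> 'v) \<Rightarrow> bool"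
where
  "representation G scale \<rho> \<longleftrightarrow>
     vector_space scale \<and>
     (\<forall>g \<in> carrier G. Vector_Spaces.linear scale scale (\<rho> g)) \<and>
     (\<forall>g \<in> carrier G. \<forall>h \<in> carrier G. \<rho> (g \<otimes>\<^bsub>G\<^esub> h) = \<rho> g \<circ> \<rho> h) \<and>
     \<rho> \<one>\<^bsub>G\<^esub> = id"

definition orbit_span ::
  "('k::field \<Rightarrow> 'v::ab_group_add \<Rightarrow> 'v) \<Rightarrow> ('g \<Rightarrow> 'v \<Rightarrow> 'v) \<Rightarrow> 'g set \<Rightarrow> 'v set \<Rightarrow> 'v set"
where
  "orbit_span scale \<rho> S Y = module.span scale {\<rho> s v | s v. s \<in> S \<and> v \<in> Y}"

end

theory Submission
  imports Defs
begin

theorem mainTheorem13: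
  fixes G :: "('g, 'm) monoid_scheme"
    and scale :: "'k::field \<Rightarrow> 'v::ab_group_add \<Rightarrow> 'v"
    and \<rho> :: "'g \<Rightarrow> 'v \<Rightarrow> 'v"
    and Basis :: "'v set"
    and A :: "'g set" and Y :: "'v set" and \<alpha> :: real
  assumes "group G"
    and "representation G scale \<rho>"
    and "finite_dimensional_vector_space scale Basis"
    and "finite A" and "A \<noteq> {}" and "A \<subseteq> carrier G"
    and "module.subspace scale Y"
    and "\<alpha> \<ge> 0"
    and "real (vector_space.dim scale (orbit_span scale \<rho> A Y)) \<le> \<alpha> * real (card A)"
  shows "\<exists>B. B \<noteq> {} \<and> B \<subseteq> A \<and>
           (\<forall>C. finite C \<and> C \<subseteq> carrier G \<longrightarrow>
              real (vector_space.dim scale (orbit_span scale \<rho> (C <#>\<^bsub>G\<^esub> B) Y))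
                \<le> \<alpha> * real (card (C <#>\<^bsub>G\<^esub> B)))"
proof -
  interpret G: group G by fact
  have rep: "vector_space scale" "\<forall>g\<in>carrier G. Vector_Spaces.linear scale scale (\<rho> g)"
     "\<forall>g\<in>carrier G. \<forall>h\<in>carrier G. \<rho> (g \<otimes>\<^bsub>G\<^esub> h) = \<rho> g \<circ> \<rho> h" "\<rho> \<one>\<^bsub>G\<^esub> = id"
    using assms(2) unfolding representation_def by auto
  interpret V: finite_dimensional_vector_space scale Basis by fact
  interpret P: finite_dimensional_vector_space_pair_1 scale Basis scale by unfold_locales
  define W where "W S = {\<rho> s v | s v. s \<in> S \<and> v \<in> Y}" for S
  define d where "d S = V.dim (W S)" for S
  define h where "h S = real (d S) - \<alpha> * real (card S)" for S
  have os: "orbit_span scale \<rho> S Y = V.span (W S)" for S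
    unfolding orbit_span_def W_def by simp
  have dos: "V.dim (orbit_span scale \<rho> S Y) = d S" for S
    unfolding os d_def by simp
  have WUn: "W (S \<union> T) = W S \<union> W T" for S T unfolding W_def by auto
  have WInt: "W (S \<inter> T) \<subseteq> V.span (W S) \<inter> V.span (W T)" for S T
  proof -
    have "W (S \<inter> T) \<subseteq> W S \<inter> W T" unfolding W_def by auto
    then show ?thesis using V.span_superset by blast
  qed
  have dsub: "d (S \<union> T) + d (S \<inter> T) \<le> d S + d T" for S T
  proof -
    have e: "V.span (W (S \<union> T)) = {x + y |x y. x \<in> V.span (W S) \<and> y \<in> V.span (W T)}"
      unfolding WUn by (rule V.span_Un)
    have 1: "d (S \<union> T) = V.dim (V.span (W (S\<union>T)))" unfolding d_def by simp
    have 2: "d (S \<inter> T) \<le> V.dim (V.span (W S) \<inter> V.span (W T))"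
      unfolding d_def by (rule V.dim_subset[OF WInt])
    have 3: "V.dim {x + y |x y. x \<in> V.span (W S) \<and> y \<in> V.span (W T)} + V.dim (V.span (W S) \<inter> V.span (W T)) = V.dim (V.span (W S)) + V.dim (V.span (W T))"
      by (rule V.dim_sums_Int) simp_all
    show ?thesis using 1 2 3 unfolding e d_def by simp
  qed
  have smult: "{c} <#>\<^bsub>G\<^esub> S = (\<lambda>s. c \<otimes>\<^bsub>G\<^esub> s) ` S" for c S
    unfolding set_mult_def by auto
  have inj_rho: "inj (\<rho> c)" if c: "c \<in> carrier G" for c
  proof (rule inj_on_inverseI)
    fix x
    have "\<rho> (inv\<^bsub>G\<^esub> c) (\<rho> c x) = \<rho> (inv\<^bsub>G\<^esub> c \<otimes>\<^bsub>G\<^esub> c) x"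
      using rep(3) c by (metis G.inv_closed comp_apply)
    also have "\<dots> = x" using c rep(4) by simp
    finally show "\<rho> (inv\<^bsub>G\<^esub> c) (\<rho> c x) = x" .
  qed
  have dtr: "d ({c} <#>\<^bsub>G\<^esub> S) = d S" if c: "c \<in> carrier G" and S: "S \<subseteq> carrier G" for c S
  proof -
    have "W ({c} <#>\<^bsub>G\<^esub> S) = \<rho> c ` W S"
      unfolding smult W_def using rep(3) c S by (auto simp: image_iff) (metis comp_apply subsetD)+
    moreover have "V.dim (\<rho> c ` W S) = V.dim (W S)"
      by (rule P.dim_image_eq) (use rep(2) c inj_rho[OF c] in \<open>auto intro: inj_on_subset\<close>)
    ultimately show ?thesis unfolding d_def by simp
  qed
  have ctr: "card ({c} <#>\<^bsub>G\<^esub> S) = card S" if c: "c \<in> carrier G" and S: "S \<subseteq> carrier G" for c S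
  proof -
    have "inj_on (\<lambda>s. c \<otimes>\<^bsub>G\<^esub> s) S"
    proof (rule inj_onI)
      fix x y assume "x \<in> S" "y \<in> S" "c \<otimes>\<^bsub>G\<^esub> x = c \<otimes>\<^bsub>G\<^esub> y"
      then show "x = y" using G.l_cancel[of c x y] c S by auto
    qed
    then show ?thesis unfolding smult by (rule card_image)
  qed
  have htr: "h ({c} <#>\<^bsub>G\<^esub> S) = h S" if c: "c \<in> carrier G" and S: "S \<subseteq> carrier G" for c S
    unfolding h_def using dtr[OF c S] ctr[OF c S] by simp
  have hsub: "h (S \<union> T) + h (S \<inter> T) \<le> h S + h T" if "finite S" "finite T" for S T
  proof -
    have "card (S \<union> T) + card (S \<inter> T) = card S + card T" using card_Un_Int that by metis
    then have c1: "real (card (S \<union> T)) + real (card (S \<inter> T)) = real (card S) + real (card T)"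
      by (metis of_nat_add)
    then have c2: "\<alpha> * real (card (S \<union> T)) + \<alpha> * real (card (S \<inter> T)) = \<alpha> * real (card S) + \<alpha> * real (card T)"
      by (metis distrib_left)
    have d1: "real (d (S \<union> T)) + real (d (S \<inter> T)) \<le> real (d S) + real (d T)"
      using dsub[of S T] by (metis of_nat_add of_nat_mono)
    show ?thesis unfolding h_def using c2 d1 by linarith
  qed
  have h0: "h {} = 0" unfolding h_def d_def W_def by simp
  define Pset where "Pset = {B. B \<subseteq> A \<and> B \<noteq> {}}"
  have PA: "Pset \<subseteq> Pow A" unfolding Pset_def by blast
  have finPs: "finite Pset" using finite_subset[OF PA] assms(4) by simp
  have finP: "finite (h ` Pset)" using finPs by (rule finite_imageI)
  have AP: "A \<in> Pset" unfolding Pset_def using assms(5) by simp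
  have ne: "h ` Pset \<noteq> {}" using AP by (metis empty_iff imageI)
  have "Min (h ` Pset) \<in> h ` Pset" by (rule Min_in[OF finP ne])
  then obtain B where Bmin: "Min (h ` Pset) = h B" and BP: "B \<in> Pset" by (rule imageE)
  have minB: "h B \<le> h D" if "D \<subseteq> A" "D \<noteq> {}" for D
  proof -
    have "D \<in> Pset" unfolding Pset_def using that by simp
    then have "h D \<in> h ` Pset" by (rule imageI)
    then have "Min (h ` Pset) \<le> h D" by (rule Min_le[OF finP])
    then show ?thesis using Bmin by simp
  qed
  have hA: "h A \<le> 0" unfolding h_def using assms(9) dos by simp
  have hB: "h B \<le> 0" using minB[of A] assms(5) hA by simp
  have Bsub: "B \<subseteq> A" "B \<noteq> {}" using BP unfolding Pset_def by auto
  have BG: "B \<subseteq> carrier G" using Bsub assms(6) by auto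
  have finB: "finite B" using Bsub assms(4) finite_subset by blast
  have finCB: "finite (C <#>\<^bsub>G\<^esub> B)" if "finite C" for C
    unfolding set_mult_def using that finB by auto
  have main: "h (C <#>\<^bsub>G\<^esub> B) \<le> h B" if "finite C" "C \<noteq> {}" "C \<subseteq> carrier G" for C
    using that
  proof (induction C rule: finite_ne_induct)
    case (singleton c)
    then show ?case using htr[OF _ BG] by simp
  next
    case (insert c C)
    have c: "c \<in> carrier G" and CG: "C \<subseteq> carrier G" using insert.prems by auto
    have IH: "h (C <#>\<^bsub>G\<^esub> B) \<le> h B" using insert.IH CG by simp
    have un: "insert c C <#>\<^bsub>G\<^esub> B = (C <#>\<^bsub>G\<^esub> B) \<union> ({c} <#>\<^bsub>G\<^esub> B)"
      unfolding set_mult_def by auto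
    have fc: "finite ({c} <#>\<^bsub>G\<^esub> B)" using finCB by simp
    have s: "h (insert c C <#>\<^bsub>G\<^esub> B) + h ((C <#>\<^bsub>G\<^esub> B) \<inter> ({c} <#>\<^bsub>G\<^esub> B))
          \<le> h (C <#>\<^bsub>G\<^esub> B) + h B"
      unfolding un using hsub[OF finCB[OF insert.hyps(1)] fc] htr[OF c BG] by simp
    define D where "D = {b \<in> B. c \<otimes>\<^bsub>G\<^esub> b \<in> C <#>\<^bsub>G\<^esub> B}"
    have DI: "(C <#>\<^bsub>G\<^esub> B) \<inter> ({c} <#>\<^bsub>G\<^esub> B) = {c} <#>\<^bsub>G\<^esub> D"
      unfolding smult D_def by auto
    show ?case
    proof (cases "D = {}")
      case True
      then show ?thesis using s DI h0 IH hB by (simp add: smult)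
    next
      case False
      have "D \<subseteq> B" unfolding D_def by auto
      then have "h B \<le> h D" using minB False Bsub by auto
      moreover have "h ({c} <#>\<^bsub>G\<^esub> D) = h D" using htr[OF c] \<open>D \<subseteq> B\<close> BG by auto
      ultimately have "h ((C <#>\<^bsub>G\<^esub> B) \<inter> ({c} <#>\<^bsub>G\<^esub> B)) \<ge> h B" using DI by simp
      then show ?thesis using s IH by linarith
    qed
  qed
  show ?thesis
  proof (intro exI conjI allI impI)
    show "B \<noteq> {}" "B \<subseteq> A" using Bsub by auto
    fix C assume C: "finite C \<and> C \<subseteq> carrier G"
    show "real (vector_space.dim scale (orbit_span scale \<rho> (C <#>\<^bsub>G\<^esub> B) Y))
                \<le> \<alpha> * real (card (C <#>\<^bsub>G\<^esub> B))"
    proof (cases "C = {}")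
      case True
      then show ?thesis using dos h0 unfolding h_def set_mult_def by simp
    next
      case False
      then show ?thesis using main[of C] C hB dos unfolding h_def by simp
    qed
  qed
qed

end
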